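(* Fix positive integers $K$, $N$, $L$. In the model described in the context, $M\hat{\mathbf{R}}^{-1}\rightarrow \mathbf{I}_{KL\times KL}$ almost surely as $M\rightarrow\infty$ and $P_e\rightarrow 0$.
   Context: Synchronous DS-CDMA model with $K$ users, spreading gain $N$, $L$ paths per user and $M$ symbol periods. For each user $k\in\{1,\dots,K\}$, path $l\in\{1,\dots,L\}$ and symbol period $t\in\{1,\dots,M\}$, the spreading code $\mathbf{s}_{kl}(t)\in\mathbb{R}^N$ has entries in $\{\pm 1/\sqrt{N}\}$ (so $\|\mathbf{s}_{kl}(t)\|=1$); these entries are i.i.d. uniform and the codes are mutually independent across $(k,l,t)$. The transmitted symbols $b_k(t)\in\{\pm1\}$ are i.i.d. uniform. The fed-back decisions satisfy $\hat b_k(t)=b_k(t)$ with probability $1-P_e$ and $\hat b_k(t)=-b_k(t)$ with probability $P_e$, independently across $(k,t)$. Let $\mathbf{S}(m)=(\mathbf{s}_{11}(m),\mathbf{s}_{12}(m),\dots,\mathbf{s}_{KL}(m))\in\mathbb{R}^{N\times KL}$, $\hat{\mathbf{B}}(m)=\mathrm{diag}(\hat b_1(m)\mathbf{I}_{L},\dots,\hat b_K(m)\mathbf{I}_{L})\in\mathbb{R}^{KL\times KL}$, $\hat{\mathbf{S}}\in\mathbb{R}^{NM\times KL}$ the matrix obtained by stacking $\mathbf{S}(1)\hat{\mathbf{B}}(1),\dots,\mathbf{S}(M)\hat{\mathbf{B}}(M)$ vertically, and $\hat{\mathbf{R}}=\hat{\mathbf{S}}^T\hat{\mathbf{S}}$.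 *)

theory Defs
  imports "HOL-Probability.Probability"
begin

text \<open>Index set of the random variables of the DS-CDMA model.
  Users are indexed by a finite type 'k (K = CARD('k)), paths by 'l (L = CARD('l)),
  chips by 'n (N = CARD('n)); symbol periods by nat (only periods t \<ge> 1 are used).
  Code t: chip i of code s_{kl}(t);  Sym k t: b_k(t);  Err k t: the sign e with
  hat b_k(t) = e * b_k(t).\<close>
datatype ('k, 'l, 'n) cdma_rv = Code 'k 'l nat 'n | Sym 'k nat | Err 'k nat

fun cdma_time :: "('k, 'l, 'n) cdma_rv \<Rightarrow> nat" where
  "cdma_time (Code k l t i) = t"
| "cdma_time (Sym k t) = t"
| "cdma_time (Err k t) = t"

definition cdma_code ::
  "(('k, 'l, 'n::finite) cdma_rv \<Rightarrow> 'a \<Rightarrow> real) \<Rightarrow> 'k \<Rightarrow> 'l \<Rightarrow> nat \<Rightarrow> 'a \<Rightarrow> real ^ 'n" where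
  "cdma_code X k l t \<omega> = (\<chi> i. X (Code k l t i) \<omega>)"

definition cdma_bhat ::
  "(('k, 'l, 'n) cdma_rv \<Rightarrow> 'a \<Rightarrow> real) \<Rightarrow> 'k \<Rightarrow> nat \<Rightarrow> 'a \<Rightarrow> real" where
  "cdma_bhat X k t \<omega> = X (Err k t) \<omega> * X (Sym k t) \<omega>"

text \<open>hat R = hat S^T hat S = sum_{m=1}^M hat B(m) S(m)^T S(m) hat B(m), a KL x KL matrix
  whose rows/columns are indexed by the pairs (k,l).\<close>
definition cdma_Rhat ::
  "(('k::finite, 'l::finite, 'n::finite) cdma_rv \<Rightarrow> 'a \<Rightarrow> real) \<Rightarrow> nat \<Rightarrow> 'a \<Rightarrow> real ^ ('k \<times> 'l) ^ ('k \<times> 'l)" where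
  "cdma_Rhat X M \<omega> = (\<chi> p q. \<Sum>t\<in>{1..M}.
      cdma_bhat X (fst p) t \<omega> * cdma_bhat X (fst q) t \<omega> *
      (cdma_code X (fst p) (snd p) t \<omega> \<bullet> cdma_code X (fst q) (snd q) t \<omega>))"

end

theory Submission
  imports Defs
begin

lemma matrix_inv_props:
  fixes A :: "real^'n^'n"
  assumes "invertible A"
  shows "A ** matrix_inv A = mat 1" "matrix_inv A ** A = mat 1"
proof -
  have "\<exists>A'. A ** A' = mat 1 \<and> A' ** A = mat 1" using assms unfolding invertible_def by blast
  from someI_ex[OF this] show "A ** matrix_inv A = mat 1" "matrix_inv A ** A = mat 1"
    unfolding matrix_inv_def by auto
qed

lemma matrix_inv_unique:
  fixes A B :: "real^'n^'n"
  assumes "A ** B = mat 1"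
  shows "matrix_inv A = B"
proof -
  have inv: "invertible A" using assms invertible_right_inverse by blast
  have "matrix_inv A = matrix_inv A ** (A ** B)" by (simp add: assms)
  also have "\<dots> = (matrix_inv A ** A) ** B" by (simp add: matrix_mul_assoc)
  also have "\<dots> = B" using matrix_inv_props(2)[OF inv] by simp
  finally show ?thesis .
qed

lemma matrix_inv_scale:
  fixes A :: "real^'n^'n"
  assumes "invertible A" "k \<noteq> 0"
  shows "matrix_inv (k *\<^sub>R A) = (1/k) *\<^sub>R matrix_inv A"
  apply (rule matrix_inv_unique)
  using matrix_inv_props(1)[OF assms(1)] assms(2)
  by (simp add: matrix_scalar_ac)

lemma tendsto_det_entries:
  fixes A :: "'b \<Rightarrow> real^'n^'n"
  assumes "\<And>i j. ((\<lambda>x. A x $ i $ j) \<longlongrightarrow> A0 $ i $ j) F"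
  shows "((\<lambda>x. det (A x)) \<longlongrightarrow> det A0) F"
  unfolding det_def
  by (intro tendsto_intros assms)

lemma cramer_inv:
  fixes A :: "real^'n^'n"
  assumes "det A \<noteq> 0"
  shows "matrix_inv A $ i $ j = det (\<chi> r c. if c = i then axis j 1 $ r else A $ r $ c) / det A"
proof -
  have inv: "invertible A" using assms invertible_det_nz by blast
  have "A *v (matrix_inv A *v axis j 1) = axis j 1"
    by (simp add: matrix_vector_mul_assoc matrix_inv_props(1)[OF inv])
  hence "matrix_inv A *v axis j 1 = (\<chi> k. det(\<chi> r c. if c=k then axis j 1 $ r else A$r$c) / det A)"
    using cramer[OF assms] by blast
  hence "(matrix_inv A *v axis j 1) $ i = det (\<chi> r c. if c = i then axis j 1 $ r else A $ r $ c) / det A"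
    by simp
  moreover have "(matrix_inv A *v axis j 1) $ i = matrix_inv A $ i $ j"
    by (simp add: matrix_vector_mult_basis column_def)
  ultimately show ?thesis by simp
qed

lemma matrix_inv_I: "matrix_inv (mat 1 :: real^'n^'n) = mat 1"
  by (rule matrix_inv_unique) simp

lemma tendsto_matrix_inv_I:
  fixes A :: "'b \<Rightarrow> real^'n^'n"
  assumes lim: "(A \<longlongrightarrow> mat 1) F"
  shows "eventually (\<lambda>x. invertible (A x)) F" "((\<lambda>x. matrix_inv (A x)) \<longlongrightarrow> mat 1) F"
proof -
  have ent: "\<And>i j. ((\<lambda>x. A x $ i $ j) \<longlongrightarrow> mat 1 $ i $ j) F"
    by (intro tendsto_vec_nth lim)
  have d: "((\<lambda>x. det (A x)) \<longlongrightarrow> det (mat 1 :: real^'n^'n)) F"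
    by (rule tendsto_det_entries[OF ent])
  hence ev: "eventually (\<lambda>x. det (A x) \<noteq> 0) F"
    using tendsto_imp_eventually_ne[OF d] by simp
  thus "eventually (\<lambda>x. invertible (A x)) F"
    by (rule eventually_mono) (simp add: invertible_det_nz)
  define G where "G = (\<lambda>B::real^'n^'n. \<chi> i j. det (\<chi> r c. if c = i then axis j 1 $ r else B $ r $ c) / det B)"
  have G: "det B \<noteq> 0 \<Longrightarrow> matrix_inv B = G B" for B
    unfolding G_def by (simp add: vec_eq_iff cramer_inv)
  have "((\<lambda>x. G (A x)) \<longlongrightarrow> G (mat 1)) F"
    unfolding G_def
    apply (intro tendsto_vec_lambda tendsto_divide d)
      apply (rule tendsto_det_entries)
      apply (auto intro!: ent)
    done
  moreover have "G (mat 1) = mat 1" proof -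
    have "det (mat 1 :: real^'n^'n) \<noteq> 0" by simp
    from G[OF this] show ?thesis using matrix_inv_I[where 'n='n] by simp
  qed
  ultimately have "((\<lambda>x. G (A x)) \<longlongrightarrow> mat 1) F" by simp
  thus "((\<lambda>x. matrix_inv (A x)) \<longlongrightarrow> mat 1) F"
    apply (rule Lim_transform_eventually)
    using ev by (rule eventually_mono) (simp add: G)
qed


lemma (in prob_space) hoeffding_tail:
  fixes Z :: "nat \<Rightarrow> 'a \<Rightarrow> real"
  assumes indep: "indep_vars (\<lambda>_. borel) Z {1..}"
    and bnd: "\<And>t \<omega>. \<bar>Z t \<omega>\<bar> \<le> B" and B: "B > 0"
    and mean: "\<And>t. t \<ge> 1 \<Longrightarrow> expectation (Z t) = 0"
    and n: "n \<ge> 1" and e: "e > 0"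
  shows "prob {\<omega>\<in>space M. \<bar>\<Sum>t\<in>{1..n}. Z t \<omega>\<bar> \<ge> real n * e} \<le> 2 * exp (- (e\<^sup>2 / (2 * B\<^sup>2))) ^ n"
proof -
  interpret H: Hoeffding_ineq M "{1..n}" Z "\<lambda>_. -B" "\<lambda>_. B" 0
  proof unfold_locales
    show "indep_vars (\<lambda>_. borel) Z {1..n}" by (rule indep_vars_subset[OF indep]) auto
    show "AE x in M. Z i x \<in> {- B..B}" for i
    proof (intro AE_I2)
      fix x show "Z i x \<in> {- B..B}" using bnd[of i x] by (simp add: abs_le_iff)
    qed
    show "0 \<equiv> \<Sum>i = 1..n. expectation (Z i)" using mean by simp
  qed simp
  have pos: "(\<Sum>i\<in>{1..n}. (B - - B)\<^sup>2) > 0" using n B by simp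
  have "prob {\<omega>\<in>space M. \<bar>(\<Sum>t\<in>{1..n}. Z t \<omega>) - 0\<bar> \<ge> real n * e}
      \<le> 2 * exp (-2 * (real n * e)\<^sup>2 / (\<Sum>i\<in>{1..n}. (B - - B)\<^sup>2))"
    by (rule H.Hoeffding_ineq_abs_ge) (use e pos in auto)
  also have "-2 * (real n * e)\<^sup>2 / (\<Sum>i\<in>{1..n}. (B - - B)\<^sup>2) = real n * (- (e\<^sup>2 / (2 * B\<^sup>2)))"
    using n B by (simp add: power2_eq_square field_simps)
  also have "exp (real n * (- (e\<^sup>2 / (2 * B\<^sup>2)))) = exp (- (e\<^sup>2 / (2 * B\<^sup>2))) ^ n"
    by (rule exp_of_nat_mult)
  finally show ?thesis by simp
qed

lemma (in prob_space) slln_bounded: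
  fixes Z :: "nat \<Rightarrow> 'a \<Rightarrow> real"
  assumes indep: "indep_vars (\<lambda>_. borel) Z {1..}"
    and bnd: "\<And>t \<omega>. \<bar>Z t \<omega>\<bar> \<le> B" and B: "B > 0"
    and mean: "\<And>t. t \<ge> 1 \<Longrightarrow> expectation (Z t) = 0"
  shows "AE \<omega> in M. (\<lambda>n. (\<Sum>t\<in>{1..n}. Z t \<omega>) / real n) \<longlonglongrightarrow> 0"
proof -
  have rv: "t \<ge> 1 \<Longrightarrow> random_variable borel (Z t)" for t
    using indep unfolding indep_vars_def by auto
  have ev: "AE \<omega> in M. eventually (\<lambda>n. \<bar>\<Sum>t\<in>{1..n}. Z t \<omega>\<bar> < real n * e) sequentially"
    if e: "e > 0" for e
  proof -
    define A where "A n = {\<omega>\<in>space M. \<bar>\<Sum>t\<in>{1..n}. Z t \<omega>\<bar> \<ge> real n * e}" for n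
    have [measurable]: "A n \<in> sets M" for n
    proof -
      have "(\<lambda>\<omega>. \<Sum>t\<in>{1..n}. Z t \<omega>) \<in> borel_measurable M"
        by (intro borel_measurable_sum) (auto intro: rv)
      then show ?thesis unfolding A_def by measurable
    qed
    define q where "q = exp (- (e\<^sup>2 / (2 * B\<^sup>2)))"
    have q: "q < 1" "q \<ge> 0" unfolding q_def using e B by auto
    have le: "measure M (A n) \<le> 2 * q ^ n" for n
    proof (cases "n \<ge> 1")
      case True
      show ?thesis unfolding A_def q_def
        using hoeffding_tail[OF indep bnd B mean True e] by simp
    next
      case False
      then have "n = 0" by simp
      then show ?thesis using prob_le_1[of "A n"] by (simp del: prob_le_1)
    qed
    have "summable (\<lambda>n. measure M (A n))"
      apply (rule summable_comparison_test'[where g="\<lambda>n. 2 * q ^ n"])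
      using q le by (auto intro!: summable_mult summable_geometric)
    from borel_cantelli_AE1[OF _ _ this]
    have "AE x in M. eventually (\<lambda>n. x \<in> space M - A n) sequentially" by (simp add: emeasure_eq_measure)
    then show ?thesis
      by eventually_elim (auto elim!: eventually_mono simp: A_def not_le)
  qed
  have "AE \<omega> in M. \<forall>m::nat. eventually (\<lambda>n. \<bar>\<Sum>t\<in>{1..n}. Z t \<omega>\<bar> < real n * (1 / Suc m)) sequentially"
    unfolding AE_all_countable by (intro allI ev) simp
  then show ?thesis
  proof eventually_elim
    case (elim \<omega>)
    show ?case
    proof (rule LIMSEQ_I)
      fix r :: real assume r: "r > 0"
      obtain m :: nat where m: "1 / Suc m < r"
        using reals_Archimedean r by (metis inverse_eq_divide of_nat_Suc)
      from elim[rule_format, of m] have "eventually (\<lambda>n. \<bar>\<Sum>t\<in>{1..n}. Z t \<omega>\<bar> < real n * (1 / Suc m)) sequentially" .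
      moreover have "eventually (\<lambda>n. n \<ge> 1) sequentially" by (rule eventually_ge_at_top)
      ultimately have "eventually (\<lambda>n. norm ((\<Sum>t\<in>{1..n}. Z t \<omega>) / real n - 0) < r) sequentially"
      proof eventually_elim
        case (elim n)
        then have "\<bar>\<Sum>t\<in>{1..n}. Z t \<omega>\<bar> / real n < 1 / Suc m"
          by (simp add: divide_simps mult.commute)
        then show ?case using m by (simp add: abs_divide)
      qed
      then show "\<exists>no. \<forall>n\<ge>no. norm ((\<Sum>t\<in>{1..n}. Z t \<omega>) / real n - 0) < r"
        by (simp add: eventually_sequentially)
    qed
  qed
qed


instance cdma_rv :: (countable, countable, countable) countable
  by countable_datatype

fun cdma_vals :: "('k, 'l, 'n::finite) cdma_rv \<Rightarrow> real set" where
  "cdma_vals (Code k l t i) = {1 / sqrt (real CARD('n)), - (1 / sqrt (real CARD('n)))}"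
| "cdma_vals (Sym k t) = {1, -1}"
| "cdma_vals (Err k t) = {1, -1}"

lemma (in prob_space) AE_two_vals:
  fixes f :: "'a \<Rightarrow> real"
  assumes "random_variable borel f" "a \<noteq> b"
    "prob {\<omega>\<in>space M. f \<omega> = a} + prob {\<omega>\<in>space M. f \<omega> = b} = 1"
  shows "AE \<omega> in M. f \<omega> \<in> {a, b}"
proof -
  have e: "{\<omega>\<in>space M. f \<omega> = x} \<in> events" for x
  proof -
    have "f -` {x} \<inter> space M \<in> events" by (rule measurable_sets[OF assms(1) borel_closed[OF closed_singleton]])
    moreover have "f -` {x} \<inter> space M = {\<omega>\<in>space M. f \<omega> = x}" by auto
    ultimately show ?thesis by simp
  qed
  note m = e[of a] e[of b]
  have "prob ({\<omega>\<in>space M. f \<omega> = a} \<union> {\<omega>\<in>space M. f \<omega> = b}) = 1"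
    using finite_measure_Union[OF m] assms(2,3) by auto
  from AE_prob_1[OF this] show ?thesis by eventually_elim auto
qed

locale cdma = prob_space M for M :: "'a measure" +
  fixes X :: "('k::finite, 'l::finite, 'n::finite) cdma_rv \<Rightarrow> 'a \<Rightarrow> real"
  assumes indep: "indep_vars (\<lambda>_. borel) X {j. 1 \<le> cdma_time j}"
    and code_p: "\<And>k l t i. 1 \<le> t \<Longrightarrow>
        prob {\<omega> \<in> space M. X (Code k l t i) \<omega> = 1 / sqrt (real CARD('n))} = 1/2"
    and code_m: "\<And>k l t i. 1 \<le> t \<Longrightarrow>
        prob {\<omega> \<in> space M. X (Code k l t i) \<omega> = - 1 / sqrt (real CARD('n))} = 1/2"
    and vals: "\<And>j. 1 \<le> cdma_time j \<Longrightarrow> AE \<omega> in M. X j \<omega> \<in> cdma_vals j"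
begin

definition "Y j \<omega> = max (-1) (min 1 (X j \<omega>))"
definition "T = {j. 1 \<le> cdma_time j}"

lemma c_pos: "1 / sqrt (real CARD('n)) > 0" and c_le: "1 / sqrt (real CARD('n)) \<le> 1"
  and c_sq: "real CARD('n) * (1 / sqrt (real CARD('n)))\<^sup>2 = 1"
  by (auto simp: power_divide)

lemma rvX: "1 \<le> cdma_time j \<Longrightarrow> random_variable borel (X j)"
  using indep unfolding indep_vars_def by auto

lemma indepY: "indep_vars (\<lambda>_. borel) Y T"
  unfolding Y_def[abs_def] T_def
  by (rule indep_vars_compose2[OF indep]) measurable

lemma Y_bnd: "\<bar>Y j \<omega>\<bar> \<le> 1"
  unfolding Y_def by auto

lemma good: "AE \<omega> in M. \<forall>j. 1 \<le> cdma_time j \<longrightarrow> X j \<omega> \<in> cdma_vals j"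
  unfolding AE_all_countable using vals by (auto intro: AE_mp[OF _ AE_I2])

lemma cdma_vals_bnd: "max (-1) (min 1 x) = x" if "x \<in> cdma_vals (j::('k,'l,'n) cdma_rv)"
proof -
  have h: "\<And>v::real. 0 < v \<Longrightarrow> v \<le> 1 \<Longrightarrow> max (-1) (min 1 v) = v \<and> max (-1) (min 1 (-v)) = -v" by auto
  show ?thesis using h[OF c_pos c_le] that by (cases j) auto
qed

lemma Y_eq: "(\<forall>j. 1 \<le> cdma_time j \<longrightarrow> X j \<omega> \<in> cdma_vals j) \<Longrightarrow> 1 \<le> cdma_time j \<Longrightarrow> Y j \<omega> = X j \<omega>"
  unfolding Y_def using cdma_vals_bnd by blast

lemma rvY: "1 \<le> cdma_time j \<Longrightarrow> random_variable borel (Y j)"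
  using indepY unfolding indep_vars_def T_def by auto

lemma intY: "1 \<le> cdma_time j \<Longrightarrow> integrable M (Y j)"
  by (rule integrable_const_bound[where B=1]) (auto intro: rvY simp: Y_bnd)

lemma EY_code:
  assumes t: "1 \<le> t"
  shows "expectation (Y (Code k l t i)) = 0"
proof -
  define C where "C = Code k l t i"
  define cc where "cc = 1 / sqrt (real CARD('n))"
  have ct: "1 \<le> cdma_time C" using t by (simp add: C_def)
  have e: "{\<omega>\<in>space M. X C \<omega> = x} \<in> events" for x
  proof -
    have "X C -` {x} \<inter> space M \<in> events"
      by (rule measurable_sets[OF rvX[OF ct] borel_closed[OF closed_singleton]])
    moreover have "X C -` {x} \<inter> space M = {\<omega>\<in>space M. X C \<omega> = x}" by auto
    ultimately show ?thesis by simp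
  qed
  define S1 where "S1 = {\<omega>\<in>space M. X C \<omega> = cc}"
  define S2 where "S2 = {\<omega>\<in>space M. X C \<omega> = - cc}"
  have S: "S1 \<in> events" "S2 \<in> events" unfolding S1_def S2_def by (rule e)+
  have p1: "prob S1 = 1/2" unfolding S1_def cc_def C_def using code_p[OF t] by simp
  have p2: "prob S2 = 1/2" unfolding S2_def cc_def C_def using code_m[OF t] by simp
  have ccpos: "cc > 0" unfolding cc_def by simp
  have "AE \<omega> in M. Y C \<omega> = cc * indicator S1 \<omega> - cc * indicator S2 \<omega>"
    using good AE_space
  proof eventually_elim
    case (elim \<omega>)
    have "X C \<omega> \<in> cdma_vals C" using elim(1) ct by blast
    hence "X C \<omega> \<in> {cc, - cc}" by (simp add: C_def cc_def)
    moreover have "Y C \<omega> = X C \<omega>" by (rule Y_eq[OF elim(1) ct])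
    ultimately show ?case using ccpos elim(2) by (auto simp: S1_def S2_def indicator_def)
  qed
  hence "expectation (Y C) = expectation (\<lambda>\<omega>. cc * indicator S1 \<omega> - cc * indicator S2 \<omega>)"
    by (intro integral_cong_AE rvY ct) (use S in measurable)
  also have "\<dots> = cc * prob S1 - cc * prob S2"
  proof -
    have i: "integrable M (\<lambda>\<omega>. cc * indicator A \<omega>)" if "A \<in> events" for A
      using that by (intro integrable_mult_right integrable_real_indicator) (auto simp: emeasure_eq_measure)
    have sp: "A \<inter> space M = A" if "A \<in> events" for A using that sets.sets_into_space by blast
    show ?thesis using i[OF S(1)] i[OF S(2)] sp[OF S(1)] sp[OF S(2)] by simp
  qed
  also have "\<dots> = 0" using p1 p2 by simp
  finally show ?thesis by (simp add: C_def)
qed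

definition "Z p q t \<omega> = Y (Err (fst p) t) \<omega> * Y (Sym (fst p) t) \<omega> * Y (Err (fst q) t) \<omega> * Y (Sym (fst q) t) \<omega> *
   (\<Sum>i\<in>UNIV. Y (Code (fst p) (snd p) t i) \<omega> * Y (Code (fst q) (snd q) t i) \<omega>)"

lemma Z_bnd: "\<bar>Z p q t \<omega>\<bar> \<le> real CARD('n)"
proof -
  have s: "\<bar>\<Sum>i\<in>UNIV. Y (Code (fst p) (snd p) t i) \<omega> * Y (Code (fst q) (snd q) t i) \<omega>\<bar> \<le> real CARD('n)"
  proof -
    have "\<bar>\<Sum>i\<in>UNIV. Y (Code (fst p) (snd p) t i) \<omega> * Y (Code (fst q) (snd q) t i) \<omega>\<bar>
        \<le> (\<Sum>i\<in>(UNIV::'n set). \<bar>Y (Code (fst p) (snd p) t i) \<omega> * Y (Code (fst q) (snd q) t i) \<omega>\<bar>)"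
      by (rule sum_abs)
    also have "\<dots> \<le> (\<Sum>i\<in>(UNIV::'n set). 1)"
      by (intro sum_mono) (auto simp: abs_mult intro: mult_le_one Y_bnd)
    finally show ?thesis by simp
  qed
  have "\<bar>Z p q t \<omega>\<bar> = \<bar>Y (Err (fst p) t) \<omega>\<bar> * \<bar>Y (Sym (fst p) t) \<omega>\<bar> * \<bar>Y (Err (fst q) t) \<omega>\<bar> * \<bar>Y (Sym (fst q) t) \<omega>\<bar> *
     \<bar>\<Sum>i\<in>UNIV. Y (Code (fst p) (snd p) t i) \<omega> * Y (Code (fst q) (snd q) t i) \<omega>\<bar>"
    unfolding Z_def by (simp add: abs_mult)
  also have "\<dots> \<le> 1 * 1 * 1 * 1 * real CARD('n)"
    by (intro mult_mono s Y_bnd) (auto intro: mult_le_one Y_bnd)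
  finally show ?thesis by simp
qed

lemma indepZ: "indep_vars (\<lambda>_. borel) (Z p q) {1..}"
proof -
  define K where "K t = {j::('k,'l,'n) cdma_rv. cdma_time j = t}" for t :: nat
  have r: "indep_vars (\<lambda>t. PiM (K t) (\<lambda>_. borel)) (\<lambda>t \<omega>. restrict (\<lambda>j. Y j \<omega>) (K t)) {1..}"
    by (rule indep_vars_restrict[OF indepY]) (auto simp: K_def T_def disjoint_family_on_def)
  define G where "G t f = f (Err (fst p) t) * f (Sym (fst p) t) * f (Err (fst q) t) * f (Sym (fst q) t) *
   (\<Sum>i\<in>UNIV. f (Code (fst p) (snd p) t i) * f (Code (fst q) (snd q) t i))" for t and f :: "('k,'l,'n) cdma_rv \<Rightarrow> real"
  have mc: "j \<in> K t \<Longrightarrow> (\<lambda>f. f j) \<in> borel_measurable (PiM (K t) (\<lambda>_. borel))" for j t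
    using measurable_component_singleton[of j "K t" "\<lambda>_. borel"] by simp
  have "indep_vars (\<lambda>_. borel) (\<lambda>t \<omega>. G t (restrict (\<lambda>j. Y j \<omega>) (K t))) {1..}"
    by (rule indep_vars_compose2[OF r]) (unfold G_def, intro borel_measurable_times borel_measurable_sum mc, auto simp: K_def)
  moreover have "G t (restrict (\<lambda>j. Y j \<omega>) (K t)) = Z p q t \<omega>" for t \<omega>
    unfolding G_def Z_def by (simp add: K_def)
  ultimately show ?thesis by simp
qed

lemma EZ:
  assumes pq: "p \<noteq> q" and t: "1 \<le> t"
  shows "expectation (Z p q t) = 0"
proof -
  define R where "R i \<omega> = Y (Err (fst p) t) \<omega> * Y (Sym (fst p) t) \<omega> * Y (Err (fst q) t) \<omega> * Y (Sym (fst q) t) \<omega> *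
      Y (Code (fst q) (snd q) t i) \<omega>" for i \<omega>
  have Zs: "Z p q t \<omega> = (\<Sum>i\<in>UNIV. Y (Code (fst p) (snd p) t i) \<omega> * R i \<omega>)" for \<omega>
    unfolding Z_def R_def by (simp add: sum_distrib_left mult_ac)
  have mR: "random_variable borel (R i)" for i
    unfolding R_def using t by (intro borel_measurable_times rvY) auto
  have iR: "integrable M (R i)" for i
  proof (rule integrable_const_bound[where B=1])
    show "AE x in M. norm (R i x) \<le> 1"
      unfolding R_def by (intro AE_I2) (auto simp: abs_mult intro!: mult_le_one Y_bnd)
  qed (rule mR)
  have ind: "indep_var borel (Y (Code (fst p) (snd p) t i)) borel (R i)" for i
  proof -
    define C where "C = Code (fst p) (snd p) t i"
    have CT: "C \<in> T" using t by (simp add: C_def T_def)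
    have r: "indep_var (PiM {C} (\<lambda>_. borel)) (\<lambda>\<omega>. restrict (\<lambda>j. Y j \<omega>) {C})
        (PiM (T - {C}) (\<lambda>_. borel)) (\<lambda>\<omega>. restrict (\<lambda>j. Y j \<omega>) (T - {C}))"
      by (rule indep_var_restrict[OF indepY]) (use CT in auto)
    define G where "G f = f (Err (fst p) t) * f (Sym (fst p) t) * f (Err (fst q) t) * f (Sym (fst q) t) *
      f (Code (fst q) (snd q) t i)" for f :: "('k,'l,'n) cdma_rv \<Rightarrow> real"
    have mc: "j \<in> A \<Longrightarrow> (\<lambda>f. f j) \<in> borel_measurable (PiM A (\<lambda>_. borel))" for j :: "('k,'l,'n) cdma_rv" and A
      using measurable_component_singleton[of j A "\<lambda>_. borel"] by simp
    have C2: "Code (fst q) (snd q) t i \<noteq> C" using pq by (auto simp: C_def prod_eq_iff)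
    have mG: "G \<in> borel_measurable (PiM (T - {C}) (\<lambda>_. borel))"
      unfolding G_def by (intro borel_measurable_times mc) (use C2 t in \<open>auto simp: T_def C_def\<close>)
    have "indep_var borel ((\<lambda>f. f C) \<circ> (\<lambda>\<omega>. restrict (\<lambda>j. Y j \<omega>) {C})) borel (G \<circ> (\<lambda>\<omega>. restrict (\<lambda>j. Y j \<omega>) (T - {C})))"
      by (rule indep_var_compose[OF r _ mG]) (rule mc, simp)
    moreover have "((\<lambda>f. f C) \<circ> (\<lambda>\<omega>. restrict (\<lambda>j. Y j \<omega>) {C})) = Y C" by (simp add: fun_eq_iff)
    moreover have "(G \<circ> (\<lambda>\<omega>. restrict (\<lambda>j. Y j \<omega>) (T - {C}))) = R i"
      using C2 t by (simp add: fun_eq_iff G_def R_def T_def C_def)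
    ultimately show ?thesis by (simp add: C_def)
  qed
  have "expectation (Z p q t) = (\<Sum>i\<in>UNIV. expectation (\<lambda>\<omega>. Y (Code (fst p) (snd p) t i) \<omega> * R i \<omega>))"
    unfolding Zs using t
    by (intro Bochner_Integration.integral_sum indep_var_integrable[OF ind] intY iR) auto
  also have "\<dots> = 0"
    using t by (simp add: indep_var_lebesgue_integral[OF ind intY iR] EY_code)
  finally show ?thesis .
qed

lemma Z_eq:
  assumes g: "\<forall>j. 1 \<le> cdma_time j \<longrightarrow> X j \<omega> \<in> cdma_vals j" and t: "1 \<le> t"
  shows "Z p q t \<omega> = cdma_bhat X (fst p) t \<omega> * cdma_bhat X (fst q) t \<omega> *
      (cdma_code X (fst p) (snd p) t \<omega> \<bullet> cdma_code X (fst q) (snd q) t \<omega>)"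
  unfolding Z_def cdma_bhat_def cdma_code_def inner_vec_def using Y_eq[OF g] t by (simp add: mult_ac)

lemma Rhat_eq:
  assumes g: "\<forall>j. 1 \<le> cdma_time j \<longrightarrow> X j \<omega> \<in> cdma_vals j"
  shows "cdma_Rhat X n \<omega> $ p $ q = (\<Sum>t\<in>{1..n}. Z p q t \<omega>)"
  unfolding cdma_Rhat_def using Z_eq[OF g] by simp

lemma Z_diag:
  assumes g: "\<forall>j. 1 \<le> cdma_time j \<longrightarrow> X j \<omega> \<in> cdma_vals j" and t: "1 \<le> t"
  shows "Z p p t \<omega> = 1"
proof -
  have pm: "x \<in> {1, -1} \<Longrightarrow> x * x = 1" for x :: real by auto
  have cc: "x \<in> {1 / sqrt (real CARD('n)), - (1 / sqrt (real CARD('n)))} \<Longrightarrow> x * x = (1 / sqrt (real CARD('n)))\<^sup>2" for x :: real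
    by (auto simp: power2_eq_square)
  have v: "X j \<omega> \<in> cdma_vals j" if "1 \<le> cdma_time j" for j using g that by blast
  have "Z p p t \<omega> = (Y (Err (fst p) t) \<omega> * Y (Err (fst p) t) \<omega>) * (Y (Sym (fst p) t) \<omega> * Y (Sym (fst p) t) \<omega>) *
     (\<Sum>i\<in>UNIV. Y (Code (fst p) (snd p) t i) \<omega> * Y (Code (fst p) (snd p) t i) \<omega>)"
    unfolding Z_def by (simp add: mult_ac)
  also have "\<dots> = 1 * 1 * (\<Sum>i\<in>(UNIV::'n set). (1 / sqrt (real CARD('n)))\<^sup>2)"
  proof -
    have e: "X (Err (fst p) t) \<omega> * X (Err (fst p) t) \<omega> = 1" using v[of "Err (fst p) t"] t by auto
    have s: "X (Sym (fst p) t) \<omega> * X (Sym (fst p) t) \<omega> = 1" using v[of "Sym (fst p) t"] t by auto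
    have cs: "X (Code (fst p) (snd p) t i) \<omega> * X (Code (fst p) (snd p) t i) \<omega> = (1 / sqrt (real CARD('n)))\<^sup>2" for i
      using v[of "Code (fst p) (snd p) t i"] t by (auto simp: power2_eq_square)
    show ?thesis using t by (simp add: Y_eq[OF g] e s cs del: power_divide)
  qed
  also have "\<dots> = 1" using c_sq by simp
  finally show ?thesis .
qed

theorem main_loc:
  "AE \<omega> in M. (\<forall>\<^sub>F n in sequentially. invertible (cdma_Rhat X n \<omega>)) \<and>
           ((\<lambda>n. real n *\<^sub>R matrix_inv (cdma_Rhat X n \<omega>)) \<longlonglongrightarrow> mat 1)"
proof -
  have "AE \<omega> in M. \<forall>p q. p \<noteq> q \<longrightarrow> (\<lambda>n. (\<Sum>t\<in>{1..n}. Z p q t \<omega>) / real n) \<longlonglongrightarrow> 0"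
    unfolding AE_all_countable
  proof (intro allI)
    fix p q :: "'k \<times> 'l"
    show "AE \<omega> in M. p \<noteq> q \<longrightarrow> (\<lambda>n. (\<Sum>t\<in>{1..n}. Z p q t \<omega>) / real n) \<longlonglongrightarrow> 0"
    proof (cases "p = q")
      case False
      have "AE \<omega> in M. (\<lambda>n. (\<Sum>t\<in>{1..n}. Z p q t \<omega>) / real n) \<longlonglongrightarrow> 0"
        by (rule slln_bounded[OF indepZ Z_bnd _ EZ[OF False]]) auto
      then show ?thesis by simp
    qed simp
  qed
  then show ?thesis using good
  proof eventually_elim
    case (elim \<omega>)
    note g = elim(2)
    define A where "A n = (1 / real n) *\<^sub>R cdma_Rhat X n \<omega>" for n
    have "((\<lambda>n. A n $ p $ q) \<longlonglongrightarrow> mat 1 $ p $ q)" for p q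
    proof (cases "p = q")
      case True
      have "\<forall>\<^sub>F n in sequentially. 1 = A n $ p $ q"
        using eventually_ge_at_top[of "1::nat"]
        by eventually_elim (simp add: A_def Rhat_eq[OF g] True Z_diag[OF g])
      hence "((\<lambda>n. A n $ p $ q) \<longlonglongrightarrow> 1)"
        by (rule Lim_transform_eventually[OF tendsto_const])
      then show ?thesis using True by (simp add: mat_def)
    next
      case False
      have "(\<lambda>n. (\<Sum>t\<in>{1..n}. Z p q t \<omega>) / real n) \<longlonglongrightarrow> 0" using elim(1) False by blast
      moreover have "A n $ p $ q = (\<Sum>t\<in>{1..n}. Z p q t \<omega>) / real n" for n
        by (simp add: A_def Rhat_eq[OF g])
      ultimately show ?thesis using False by (simp add: mat_def)
    qed
    hence lim: "A \<longlonglongrightarrow> mat 1"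
      by (intro vec_tendstoI) simp
    note inv = tendsto_matrix_inv_I[OF lim]
    have R: "cdma_Rhat X n \<omega> = real n *\<^sub>R A n" if "n \<ge> 1" for n
      using that by (simp add: A_def)
    have "\<forall>\<^sub>F n in sequentially. invertible (cdma_Rhat X n \<omega>)"
      using inv(1) eventually_ge_at_top[of "1::nat"]
      by eventually_elim (simp add: R scalar_invertible)
    moreover have "\<forall>\<^sub>F n in sequentially. matrix_inv (A n) = real n *\<^sub>R matrix_inv (cdma_Rhat X n \<omega>)"
      using inv(1) eventually_ge_at_top[of "1::nat"]
      by eventually_elim (simp add: R matrix_inv_scale)
    hence "((\<lambda>n. real n *\<^sub>R matrix_inv (cdma_Rhat X n \<omega>)) \<longlonglongrightarrow> mat 1)"
      by (rule Lim_transform_eventually[OF inv(2)])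
    ultimately show ?case by blast
  qed
qed

end


theorem mainTheorem1:
  fixes P :: "'a measure"
    and X :: "('k::finite, 'l::finite, 'n::finite) cdma_rv \<Rightarrow> 'a \<Rightarrow> real"
    and pe :: "nat \<Rightarrow> real"
  assumes "prob_space P"
    and indep: "prob_space.indep_vars P (\<lambda>_. borel) X {j. 1 \<le> cdma_time j}"
    and code_p: "\<And>k l t i. 1 \<le> t \<Longrightarrow>
        measure P {\<omega> \<in> space P. X (Code k l t i) \<omega> = 1 / sqrt (real CARD('n))} = 1/2"
    and code_m: "\<And>k l t i. 1 \<le> t \<Longrightarrow>
        measure P {\<omega> \<in> space P. X (Code k l t i) \<omega> = - 1 / sqrt (real CARD('n))} = 1/2"
    and sym_p: "\<And>k t. 1 \<le> t \<Longrightarrow> measure P {\<omega> \<in> space P. X (Sym k t) \<omega> = 1} = 1/2"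
    and sym_m: "\<And>k t. 1 \<le> t \<Longrightarrow> measure P {\<omega> \<in> space P. X (Sym k t) \<omega> = -1} = 1/2"
    and pe_range: "\<And>t. 0 \<le> pe t \<and> pe t \<le> 1"
    and err_p: "\<And>k t. 1 \<le> t \<Longrightarrow> measure P {\<omega> \<in> space P. X (Err k t) \<omega> = 1} = 1 - pe t"
    and err_m: "\<And>k t. 1 \<le> t \<Longrightarrow> measure P {\<omega> \<in> space P. X (Err k t) \<omega> = -1} = pe t"
    and pe_lim: "pe \<longlonglongrightarrow> 0"
  shows "AE \<omega> in P. (\<forall>\<^sub>F M in sequentially. invertible (cdma_Rhat X M \<omega>)) \<and>
           ((\<lambda>M. real M *\<^sub>R matrix_inv (cdma_Rhat X M \<omega>)) \<longlonglongrightarrow> mat 1)"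
  proof -
  interpret prob_space P by fact
  have vals: "AE \<omega> in P. X j \<omega> \<in> cdma_vals j" if j: "1 \<le> cdma_time j" for j
  proof -
    have rv: "random_variable borel (X j)" using indep j unfolding indep_vars_def by auto
    show ?thesis
    proof (cases j)
      case (Code k l t i)
      have t: "1 \<le> t" using j Code by simp
      have "AE \<omega> in P. X j \<omega> \<in> {1 / sqrt (real CARD('n)), - (1 / sqrt (real CARD('n)))}"
      proof (rule AE_two_vals[OF rv])
        have h1: "prob {\<omega>\<in>space P. X j \<omega> = 1 / sqrt (real CARD('n))} = 1/2"
          using code_p[OF t, of k l i] Code by simp
        have h2: "prob {\<omega>\<in>space P. X j \<omega> = - (1 / sqrt (real CARD('n)))} = 1/2"
          using code_m[OF t, of k l i] Code by simp
        show "prob {\<omega>\<in>space P. X j \<omega> = 1 / sqrt (real CARD('n))} +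
          prob {\<omega>\<in>space P. X j \<omega> = - (1 / sqrt (real CARD('n)))} = 1"
          using h1 h2 by simp
      qed simp
      then show ?thesis using Code by simp
    next
      case (Sym k t)
      have t: "1 \<le> t" using j Sym by simp
      have "AE \<omega> in P. X j \<omega> \<in> {1, -1}"
        by (rule AE_two_vals[OF rv]) (use sym_p[OF t, of k] sym_m[OF t, of k] Sym in simp_all)
      then show ?thesis using Sym by simp
    next
      case (Err k t)
      have t: "1 \<le> t" using j Err by simp
      have "AE \<omega> in P. X j \<omega> \<in> {1, -1}"
        by (rule AE_two_vals[OF rv]) (use err_p[OF t, of k] err_m[OF t, of k] Err in simp_all)
      then show ?thesis using Err by simp
    qed
  qed
  interpret cdma P X
    by unfold_locales (use indep code_p code_m vals in auto)
  show ?thesis by (rule main_loc)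
qed

end
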